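(* Let $\mathcal{G}$ be an infinite prefilter on $\omega$. Then either $\mathcal{G}$ is homeomorphic to the Cantor set $2^\omega$, or $\mathcal{G}$ is homeomorphic to some filter on $\omega$.
   Context: A prefilter on $\omega$ is a collection $\mathcal{G}\subseteq\mathcal{P}(\omega)$ that is upward-closed ($x\in\mathcal{G}$, $x\subseteq y\subseteq\omega$ implies $y\in\mathcal{G}$) and closed under finite intersections. A filter on $\omega$ is a collection $\mathcal{F}\subseteq\mathcal{P}(\omega)$ that is upward-closed, closed under finite intersections, closed under finite modifications (if $x\in\mathcal{F}$ and $y\subseteq\omega$ differs from $x$ by a finite set then $y\in\mathcal{F}$), with $\varnothing\notin\mathcal{F}$ and $\omega\in\mathcal{F}$. Subsets of $\mathcal{P}(\omega)$ are identified via characteristic functions with subspaces of $2^\omega$. *)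

theory Defs
  imports "HOL-Analysis.Analysis"
begin

definition cantor_top :: "(nat \<Rightarrow> bool) topology" where
  "cantor_top = product_topology (\<lambda>_. discrete_topology (UNIV :: bool set)) UNIV"

definition char_set :: "nat set set \<Rightarrow> (nat \<Rightarrow> bool) set" where
  "char_set G = (\<lambda>x. (\<lambda>n. n \<in> x)) ` G"

definition fam_top :: "nat set set \<Rightarrow> (nat \<Rightarrow> bool) topology" where
  "fam_top G = subtopology cantor_top (char_set G)"

definition prefilter :: "nat set set \<Rightarrow> bool" where
  "prefilter G \<longleftrightarrow>
     (\<forall>x y. x \<in> G \<longrightarrow> x \<subseteq> y \<longrightarrow> y \<in> G) \<and>
     (\<forall>x y. x \<in> G \<longrightarrow> y \<in> G \<longrightarrow> x \<inter> y \<in> G)"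

definition omega_filter :: "nat set set \<Rightarrow> bool" where
  "omega_filter F \<longleftrightarrow>
     (\<forall>x y. x \<in> F \<longrightarrow> x \<subseteq> y \<longrightarrow> y \<in> F) \<and>
     (\<forall>x y. x \<in> F \<longrightarrow> y \<in> F \<longrightarrow> x \<inter> y \<in> F) \<and>
     (\<forall>x y. x \<in> F \<longrightarrow> finite ((x - y) \<union> (y - x)) \<longrightarrow> y \<in> F) \<and>
     {} \<notin> F \<and> UNIV \<in> F"

end

theory Submission
  imports Defs
begin

lemma char_set_eq: "char_set G = {f. Collect f \<in> G}"
  unfolding char_set_def by (auto intro!: image_eqI[where x="Collect f" for f])

lemma topspace_cantor: "topspace cantor_top = UNIV"
  by (simp add: cantor_top_def topspace_product_topology)

lemma topspace_fam: "topspace (fam_top G) = char_set G"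
  by (simp add: fam_top_def topspace_cantor)

lemma cont_proj: "continuous_map cantor_top (discrete_topology UNIV) (\<lambda>f. f n)"
  unfolding cantor_top_def
  using continuous_map_product_projection[of n UNIV "\<lambda>_. discrete_topology (UNIV::bool set)"]
  by simp

lemma cont_into:
  assumes "\<And>n. continuous_map cantor_top (discrete_topology UNIV) (\<lambda>f. h f n)"
  shows "continuous_map cantor_top cantor_top h"
  using assms unfolding cantor_top_def[of] 
  by (subst (2) cantor_top_def[symmetric]) (simp add: continuous_map_componentwise_UNIV cantor_top_def)

lemma cont_fam:
  assumes "continuous_map cantor_top cantor_top h" "\<And>f. Collect f \<in> G \<Longrightarrow> Collect (h f) \<in> H"
  shows "continuous_map (fam_top G) (fam_top H) h"
  unfolding fam_top_def
  apply (rule continuous_map_into_subtopology)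
   apply (rule continuous_map_from_subtopology[OF assms(1)])
  using assms(2) by (auto simp: topspace_cantor char_set_eq)

theorem mainTheorem2:
  fixes G :: "nat set set"
  assumes "prefilter G" and "infinite G"
  shows "fam_top G homeomorphic_space cantor_top \<or>
         (\<exists>F. omega_filter F \<and> fam_top G homeomorphic_space fam_top F)"
proof -
  have up: "\<And>x y. x \<in> G \<Longrightarrow> x \<subseteq> y \<Longrightarrow> y \<in> G"
   and int: "\<And>x y. x \<in> G \<Longrightarrow> y \<in> G \<Longrightarrow> x \<inter> y \<in> G"
    using assms(1) unfolding prefilter_def by blast+
  define A where "A = \<Inter>G"
  define B where "B = - A"
  have AG: "\<And>x. x \<in> G \<Longrightarrow> A \<subseteq> x" unfolding A_def by blast
  have cof: "\<And>n. n \<in> B \<Longrightarrow> - {n} \<in> G"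
  proof -
    fix n assume "n \<in> B"
    then obtain x where x: "x \<in> G" "n \<notin> x" unfolding B_def A_def by blast
    then have "x \<subseteq> - {n}" by blast
    then show "- {n} \<in> G" using up x(1) by blast
  qed
  have infB: "infinite B"
  proof
    assume "finite B"
    have "G \<subseteq> (\<lambda>y. A \<union> y) ` Pow B"
    proof
      fix x assume "x \<in> G"
      then have "x = A \<union> (x \<inter> B)" using AG unfolding B_def by blast
      then show "x \<in> (\<lambda>y. A \<union> y) ` Pow B" by blast
    qed
    then have "finite G" using \<open>finite B\<close> finite_subset by blast
    then show False using assms(2) by simp
  qed
  define e where "e = enumerate B"
  have inj: "inj e" unfolding e_def using strict_mono_enumerate[OF infB] strict_mono_imp_inj_on by blast
  have rng: "range e = B" unfolding e_def using range_enumerate[OF infB] .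
  have eB: "\<And>n. e n \<in> B" using rng by blast
  have eA: "\<And>n. e n \<notin> A" using eB unfolding B_def by blast
  define F where "F = {y. e ` y \<union> A \<in> G}"
  define \<Phi> where "\<Phi> = (\<lambda>(f::nat\<Rightarrow>bool) n. f (e n))"
  define \<Psi> where "\<Psi> = (\<lambda>(g::nat\<Rightarrow>bool) m. if m \<in> A then True else g (inv e m))"
  have hom: "fam_top G homeomorphic_space fam_top F"
    unfolding homeomorphic_space_def homeomorphic_maps_def
  proof (intro exI conjI ballI)
    show "continuous_map (fam_top G) (fam_top F) \<Phi>"
    proof (rule cont_fam)
      show "continuous_map cantor_top cantor_top \<Phi>"
        unfolding \<Phi>_def by (rule cont_into) (rule cont_proj)
      fix f assume f: "Collect f \<in> G"
      have "e ` Collect (\<Phi> f) \<union> A = Collect f"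
      proof
        show "e ` Collect (\<Phi> f) \<union> A \<subseteq> Collect f" using AG[OF f] unfolding \<Phi>_def by auto
        show "Collect f \<subseteq> e ` Collect (\<Phi> f) \<union> A"
        proof
          fix m assume m: "m \<in> Collect f"
          show "m \<in> e ` Collect (\<Phi> f) \<union> A"
          proof (cases "m \<in> A")
            case False
            then have "m \<in> range e" using rng unfolding B_def by blast
            then obtain k where "m = e k" by blast
            then show ?thesis using m unfolding \<Phi>_def by auto
          qed simp
        qed
      qed
      then show "Collect (\<Phi> f) \<in> F" using f unfolding F_def by simp
    qed
    show "continuous_map (fam_top F) (fam_top G) \<Psi>"
    proof (rule cont_fam)
      show "continuous_map cantor_top cantor_top \<Psi>"
        unfolding \<Psi>_def
      proof (rule cont_into)
        fix n
        show "continuous_map cantor_top (discrete_topology UNIV) (\<lambda>f. if n \<in> A then True else f (inv e n))"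
          by (cases "n \<in> A") (simp_all add: cont_proj)
      qed
      fix g assume g: "Collect g \<in> F"
      have "Collect (\<Psi> g) = e ` Collect g \<union> A"
      proof
        show "Collect (\<Psi> g) \<subseteq> e ` Collect g \<union> A"
        proof
          fix m assume m: "m \<in> Collect (\<Psi> g)"
          show "m \<in> e ` Collect g \<union> A"
          proof (cases "m \<in> A")
            case False
            then have "m \<in> range e" using rng unfolding B_def by blast
            then have "e (inv e m) = m" by (simp add: f_inv_into_f)
            then show ?thesis using m False unfolding \<Psi>_def
              by (auto intro!: image_eqI[where x="inv e m"])
          qed simp
        qed
        show "e ` Collect g \<union> A \<subseteq> Collect (\<Psi> g)"
          using eA inj unfolding \<Psi>_def by auto
      qed
      then show "Collect (\<Psi> g) \<in> G" using g unfolding F_def by simp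
    qed
    fix f assume "f \<in> topspace (fam_top G)"
    then have f: "Collect f \<in> G" by (simp add: topspace_fam char_set_eq)
    show "\<Psi> (\<Phi> f) = f"
    proof
      fix m
      show "\<Psi> (\<Phi> f) m = f m"
      proof (cases "m \<in> A")
        case True then show ?thesis using AG[OF f] unfolding \<Psi>_def by auto
      next
        case False
        then have "m \<in> range e" using rng unfolding B_def by blast
        then have "e (inv e m) = m" by (simp add: f_inv_into_f)
        then show ?thesis using False unfolding \<Psi>_def \<Phi>_def by simp
      qed
    qed
  next
    fix g
    show "\<Phi> (\<Psi> g) = g" unfolding \<Phi>_def \<Psi>_def using eA inj by (auto simp: inv_f_f)
  qed
  show ?thesis
  proof (cases "A \<in> G")
    case True
    have "F = UNIV" unfolding F_def using up[OF True] by blast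
    then have "fam_top F = cantor_top"
      unfolding fam_top_def char_set_eq by (simp add: topspace_cantor[symmetric])
    then show ?thesis using hom by simp
  next
    case False
    have fin: "finite D \<Longrightarrow> X \<in> G \<Longrightarrow> X - e ` D \<in> G" for D X
    proof (induction D rule: finite_induct)
      case (insert d D)
      have "X - e ` insert d D = (X - e ` D) \<inter> - {e d}" by auto
      then show ?case using int[OF insert.IH[OF insert.prems] cof[OF eB]] by simp
    qed simp
    have "omega_filter F"
      unfolding omega_filter_def
    proof (intro conjI allI impI)
      fix x y assume "x \<in> F" "x \<subseteq> y"
      then show "y \<in> F" unfolding F_def using up by (metis Un_mono image_mono mem_Collect_eq order_refl)
    next
      fix x y assume "x \<in> F" "y \<in> F"
      moreover have "e ` (x \<inter> y) \<union> A = (e ` x \<union> A) \<inter> (e ` y \<union> A)"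
        using inj eA by (auto simp: image_Int)
      ultimately show "x \<inter> y \<in> F" unfolding F_def using int by auto
    next
      fix x y assume x: "x \<in> F" and fi: "finite (x - y \<union> (y - x))"
      have "(e ` x \<union> A) - e ` (x - y) \<subseteq> e ` y \<union> A" by auto
      moreover have "(e ` x \<union> A) - e ` (x - y) \<in> G"
        using fin[of "x - y"] fi x unfolding F_def by auto
      ultimately show "y \<in> F" unfolding F_def using up by auto
    next
      show "{} \<notin> F" using False unfolding F_def by simp
    next
      obtain x where "x \<in> G" using assms(2) by (metis ex_in_conv finite.emptyI)
      moreover have "e ` UNIV \<union> A = UNIV" using rng unfolding B_def by auto
      ultimately show "UNIV \<in> F" unfolding F_def using up by auto
    qed
    then show ?thesis using hom by blast
  qed
qed

end
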